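(* Let $\mathbf X_1,\dots,\mathbf X_n$ be i.i.d. copies of $\mathbf X\in\mathbb R^d$ with $K_{\mathbf X}=\sup_j\|X_j\|_{\psi_2}<\infty$, $\boldsymbol\Sigma_{\mathbf X}=\mathbb E\mathbf X\mathbf X^T$, $\boldsymbol\Sigma_n=n^{-1}\sum_i\mathbf X_i\mathbf X_i^T$, and let $\bar c$ be the universal constant for which $\mathbb P(\|\boldsymbol\Sigma_n-\boldsymbol\Sigma_{\mathbf X}\|_{\max}>4A_XK_{\mathbf X}^2\sqrt{\log d/n})\le2d^{2-\bar cA_X^2}$ for every constant $A_X>0$ with $A_X\sqrt{\log d/n}\le1$. Fix such an $A_X$ and $0<\kappa<1$. Assume $\lambda_{\min}(\boldsymbol\Sigma_{\mathbf X})>\delta>0$, $s_{\mathbf v}\sqrt{\log d/n}\le(1-\kappa)\frac{\lambda_{\min}(\boldsymbol\Sigma_{\mathbf X})}{(1+1)^2\,4A_XK_{\mathbf X}^2}$ and $\lambda'\ge\|\mathbf v^*\|_14A_XK_{\mathbf X}^2\sqrt{\log d/n}$. Then with probability at least $1-2d^{2-\bar cA_X^2}$, $\|\hat{\mathbf v}-\mathbf v^*\|_1\le\frac{8\lambda's_{\mathbf v}}{\mathrm{RE}_\kappa(s_{\mathbf v},1)}$; additionally $\|\hat{\mathbf v}_{S_{\mathbf v}^c}-\mathbf v^*_{S_{\mathbf v}^c}\|_1\le\|\hat{\mathbf v}_{S_{\mathbf v}}-\mathbf v^*_{S_{\mathbf v}}\|_1$.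
   Context: $\mathbf v^*=\boldsymbol\Sigma_{\mathbf X}^{-1}\mathbf e_1^T$, $S_{\mathbf v}=\mathrm{supp}(\mathbf v^* )$, $s_{\mathbf v}=|S_{\mathbf v}|$. $\hat{\mathbf v}=\arg\min\|\mathbf v\|_1$ subject to $\|\mathbf v^T\boldsymbol\Sigma_n-\mathbf e_1\|_\infty\le\lambda'$, with $\mathbf e_1=(1,0,\dots,0)$. For a vector $\mathbf u$ and index set $S$, $\mathbf u_S$ is the subvector on $S$. Restricted eigenvalue: for symmetric positive semidefinite $\mathbf M\in\mathbb R^{d\times d}$, $\mathrm{RE}_{\mathbf M}(s,\xi)=\min_{|S|\le s}\min\{\mathbf u^T\mathbf M\mathbf u/\|\mathbf u_S\|_2^2:\mathbf u\ne0,\|\mathbf u_{S^c}\|_1\le\xi\|\mathbf u_S\|_1\}$, and $\mathrm{RE}_\kappa(s,\xi)=\kappa\,\mathrm{RE}_{\boldsymbol\Sigma_{\mathbf X}}(s,\xi)$. $\|X\|_{\psi_2}=\sup_{p\ge1}p^{-1/2}(\mathbb E|X|^p)^{1/p}$. *)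

theory Defs
  imports "HOL-Probability.Probability"
begin

text \<open>Conventions: vectors in R^d are functions nat => real, coordinates 0..d-1
  (coordinate 0 plays the role of the first coordinate e_1); d x d matrices are
  functions nat => nat => real with indices below d.\<close>

definition e1 :: "nat \<Rightarrow> real" where
  "e1 k = (if k = 0 then 1 else 0)"

definition l1norm :: "nat \<Rightarrow> (nat \<Rightarrow> real) \<Rightarrow> real" where
  "l1norm d v = (\<Sum>k<d. \<bar>v k\<bar>)"

definition supvec :: "nat \<Rightarrow> (nat \<Rightarrow> real) \<Rightarrow> bool" where
  "supvec d v \<longleftrightarrow> (\<forall>k\<ge>d. v k = 0)"

definition max_norm :: "nat \<Rightarrow> (nat \<Rightarrow> nat \<Rightarrow> real) \<Rightarrow> real" where
  "max_norm d A = Max ({\<bar>A k l\<bar> | k l. k < d \<and> l < d} \<union> {0})"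

definition mat_inv :: "nat \<Rightarrow> (nat \<Rightarrow> nat \<Rightarrow> real) \<Rightarrow> (nat \<Rightarrow> nat \<Rightarrow> real)" where
  "mat_inv d A = (THE B.
      (\<forall>i<d. \<forall>j<d. (\<Sum>k<d. A i k * B k j) = (if i = j then 1 else 0)) \<and>
      (\<forall>i<d. \<forall>j<d. (\<Sum>k<d. B i k * A k j) = (if i = j then 1 else 0)) \<and>
      (\<forall>i j. \<not> (i < d \<and> j < d) \<longrightarrow> B i j = 0))"

definition mat_eigenvalues :: "nat \<Rightarrow> (nat \<Rightarrow> nat \<Rightarrow> real) \<Rightarrow> real set" where
  "mat_eigenvalues d A = {\<mu>. \<exists>v. (\<exists>j<d. v j \<noteq> 0) \<and>
      (\<forall>k<d. (\<Sum>l<d. A k l * v l) = \<mu> * v k)}"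

definition lambda_min :: "nat \<Rightarrow> (nat \<Rightarrow> nat \<Rightarrow> real) \<Rightarrow> real" where
  "lambda_min d A = Min (mat_eigenvalues d A)"

definition quad_form :: "nat \<Rightarrow> (nat \<Rightarrow> nat \<Rightarrow> real) \<Rightarrow> (nat \<Rightarrow> real) \<Rightarrow> real" where
  "quad_form d A u = (\<Sum>k<d. \<Sum>l<d. u k * A k l * u l)"

definition RE :: "nat \<Rightarrow> (nat \<Rightarrow> nat \<Rightarrow> real) \<Rightarrow> nat \<Rightarrow> real \<Rightarrow> real" where
  "RE d A s \<xi> = Inf {quad_form d A u / (\<Sum>k\<in>S. (u k)\<^sup>2) | S u.
      S \<subseteq> {..<d} \<and> card S \<le> s \<and> supvec d u \<and> (\<exists>k<d. u k \<noteq> 0) \<and>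
      (\<Sum>k\<in>{..<d} - S. \<bar>u k\<bar>) \<le> \<xi> * (\<Sum>k\<in>S. \<bar>u k\<bar>)}"

definition psi2_norm :: "'a measure \<Rightarrow> ('a \<Rightarrow> real) \<Rightarrow> ereal" where
  "psi2_norm M Y = (if \<forall>p\<ge>1. integrable M (\<lambda>x. \<bar>Y x\<bar> powr p)
     then (SUP p\<in>{1::real..}. ereal (p powr (-1/2) *
             (integral\<^sup>L M (\<lambda>x. \<bar>Y x\<bar> powr p)) powr (1/p)))
     else \<infinity>)"

definition sample_cov :: "nat \<Rightarrow> (nat \<Rightarrow> nat \<Rightarrow> 'a \<Rightarrow> real) \<Rightarrow> 'a \<Rightarrow> nat \<Rightarrow> nat \<Rightarrow> real" where
  "sample_cov n X \<omega> k l = (1 / real n) * (\<Sum>i<n. X i k \<omega> * X i l \<omega>)"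

definition clime_feasible :: "nat \<Rightarrow> (nat \<Rightarrow> nat \<Rightarrow> real) \<Rightarrow> real \<Rightarrow> (nat \<Rightarrow> real) \<Rightarrow> bool" where
  "clime_feasible d Sn lam v \<longleftrightarrow> supvec d v \<and>
     (\<forall>j<d. \<bar>(\<Sum>k<d. v k * Sn k j) - e1 j\<bar> \<le> lam)"

definition clime_minimizer :: "nat \<Rightarrow> (nat \<Rightarrow> nat \<Rightarrow> real) \<Rightarrow> real \<Rightarrow> (nat \<Rightarrow> real) \<Rightarrow> bool" where
  "clime_minimizer d Sn lam v \<longleftrightarrow> clime_feasible d Sn lam v \<and>
     (\<forall>w. clime_feasible d Sn lam w \<longrightarrow> l1norm d v \<le> l1norm d w)"

end

theory Submission
  imports Defs "Jordan_Normal_Form.Char_Poly"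
begin

definition nsq :: "nat \<Rightarrow> (nat \<Rightarrow> real) \<Rightarrow> real" where
  "nsq d w = (\<Sum>k<d. (w k)\<^sup>2)"

lemma quad_expand:
  assumes sym: "\<And>k l. A k l = A l k"
  shows "quad_form d A (\<lambda>k. u k + c * w k) = quad_form d A u
     + 2 * c * (\<Sum>k<d. \<Sum>l<d. u k * A k l * w l) + c\<^sup>2 * quad_form d A w"
proof -
  have swap: "(\<Sum>k<d. \<Sum>l<d. w k * A k l * u l) = (\<Sum>k<d. \<Sum>l<d. u k * A k l * w l)"
    by (subst sum.swap) (simp add: sym mult.commute mult.left_commute)
  have "quad_form d A (\<lambda>k. u k + c * w k) =
     (\<Sum>k<d. \<Sum>l<d. u k * A k l * u l + c * (u k * A k l * w l) + c * (w k * A k l * u l)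
        + c\<^sup>2 * (w k * A k l * w l))"
    unfolding quad_form_def by (intro sum.cong refl) (simp add: algebra_simps power2_eq_square)
  also have "\<dots> = quad_form d A u + c * (\<Sum>k<d. \<Sum>l<d. u k * A k l * w l)
      + c * (\<Sum>k<d. \<Sum>l<d. w k * A k l * u l) + c\<^sup>2 * quad_form d A w"
    unfolding quad_form_def by (simp add: sum.distrib sum_distrib_left)
  finally show ?thesis using swap by (simp add: algebra_simps)
qed

lemma nsq_expand:
  "nsq d (\<lambda>k. u k + c * w k) = nsq d u + 2 * c * (\<Sum>k<d. u k * w k) + c\<^sup>2 * nsq d w"
proof -
  have "nsq d (\<lambda>k. u k + c * w k) = (\<Sum>k<d. (u k)\<^sup>2 + 2 * c * (u k * w k) + c\<^sup>2 * (w k)\<^sup>2)"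
    unfolding nsq_def by (intro sum.cong refl) (simp add: algebra_simps power2_eq_square)
  thus ?thesis unfolding nsq_def by (simp add: sum.distrib sum_distrib_left)
qed

lemma quadratic_nonneg_lin0:
  fixes \<beta> \<gamma> :: real
  assumes "\<And>t. 2 * t * \<beta> + t\<^sup>2 * \<gamma> \<ge> 0"
  shows "\<beta> = 0"
proof (rule ccontr)
  assume nz: "\<beta> \<noteq> 0"
  define g where "g = \<bar>\<gamma>\<bar> + 1"
  have g: "g > 0" "\<bar>\<gamma>\<bar> \<le> g" unfolding g_def by auto
  define t where "t = - \<beta> / g"
  have "t\<^sup>2 * \<gamma> \<le> t\<^sup>2 * g"
    using g by (intro mult_left_mono) auto
  also have "\<dots> = \<beta>\<^sup>2 / g" unfolding t_def using g by (simp add: power2_eq_square field_simps)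
  finally have 1: "t\<^sup>2 * \<gamma> \<le> \<beta>\<^sup>2 / g" .
  have 2: "2 * t * \<beta> = - 2 * (\<beta>\<^sup>2 / g)" unfolding t_def using g by (simp add: power2_eq_square field_simps)
  have "\<beta>\<^sup>2 / g > 0" using nz g by simp
  with 1 2 assms[of t] show False by linarith
qed

lemma quad_form_restrict:
  "quad_form d A (\<lambda>k. if k < d then w k else 0) = quad_form d A w"
  unfolding quad_form_def by (intro sum.cong refl) auto

lemma nsq_restrict:
  "nsq d (\<lambda>k. if k < d then w k else 0) = nsq d w"
  unfolding nsq_def by (intro sum.cong refl) auto

lemma nsq_nonneg: "nsq d w \<ge> 0" unfolding nsq_def by (intro sum_nonneg) auto

lemma nsq_zero: "nsq d w = 0 \<Longrightarrow> k < d \<Longrightarrow> w k = 0"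
  unfolding nsq_def by (subst (asm) sum_nonneg_eq_0_iff) auto

lemma quad_zero: assumes "\<And>k. k < d \<Longrightarrow> w k = 0" shows "quad_form d A w = 0"
  unfolding quad_form_def using assms by simp

lemma quad_scale: "quad_form d A (\<lambda>k. w k / c) = quad_form d A w / c\<^sup>2"
  unfolding quad_form_def by (simp add: sum_divide_distrib power2_eq_square)

lemma nsq_scale: "nsq d (\<lambda>k. w k / c) = nsq d w / c\<^sup>2"
  unfolding nsq_def by (simp add: sum_divide_distrib power_divide)

lemma compact_sphere: "compact {u::nat\<Rightarrow>real. (\<forall>k\<ge>d. u k = 0) \<and> nsq d u = 1}"
proof -
  define B where "B = (\<lambda>k::nat. if k < d then {-1..1::real} else {0})"
  have c1: "compact (PiE UNIV B)"
  proof -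
    have "compactin (product_topology (\<lambda>_. euclidean) UNIV) (PiE UNIV B)"
      unfolding compactin_PiE by (auto simp: B_def compactin_euclidean_iff)
    thus ?thesis by (simp add: euclidean_product_topology compactin_euclidean_iff)
  qed
  have cont: "continuous_on UNIV (\<lambda>u::nat\<Rightarrow>real. nsq d u)"
    unfolding nsq_def by (intro continuous_intros continuous_on_product_coordinates)
  have c2: "closed {u::nat\<Rightarrow>real. nsq d u = 1}"
    by (rule closed_Collect_eq[OF cont]) (intro continuous_intros)
  have eq: "{u::nat\<Rightarrow>real. (\<forall>k\<ge>d. u k = 0) \<and> nsq d u = 1} = PiE UNIV B \<inter> {u. nsq d u = 1}"
  proof (intro equalityI subsetI)
    fix u assume u: "u \<in> {u::nat\<Rightarrow>real. (\<forall>k\<ge>d. u k = 0) \<and> nsq d u = 1}"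
    have "u k \<in> B k" for k
    proof (cases "k < d")
      case True
      have "(u k)\<^sup>2 \<le> nsq d u" unfolding nsq_def
        by (rule member_le_sum) (use True in auto)
      with u have "(u k)\<^sup>2 \<le> 1" by simp
      hence "\<bar>u k\<bar> \<le> 1" by (simp add: abs_square_le_1)
      thus ?thesis using True by (auto simp: B_def)
    next
      case False thus ?thesis using u by (auto simp: B_def)
    qed
    thus "u \<in> PiE UNIV B \<inter> {u. nsq d u = 1}" using u by auto
  next
    fix u assume "u \<in> PiE UNIV B \<inter> {u. nsq d u = 1}"
    thus "u \<in> {u::nat\<Rightarrow>real. (\<forall>k\<ge>d. u k = 0) \<and> nsq d u = 1}"
      by (auto simp: B_def PiE_iff split: if_splits) (meson leD)
  qed
  show ?thesis unfolding eq using c1 c2 by (rule compact_Int_closed)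
qed

lemma min_eigen:
  assumes sym: "\<And>k l. A k l = A l k" and d: "d \<ge> 1"
  shows "\<exists>u \<mu>. (\<exists>j<d. u j \<noteq> 0) \<and> (\<forall>k<d. (\<Sum>l<d. A k l * u l) = \<mu> * u k) \<and>
     (\<forall>w. quad_form d A w \<ge> \<mu> * nsq d w)"
proof -
  define T where "T = {u::nat\<Rightarrow>real. (\<forall>k\<ge>d. u k = 0) \<and> nsq d u = 1}"
  have cT: "compact T" unfolding T_def by (rule compact_sphere)
  define e0 where "e0 = (\<lambda>k::nat. if k = 0 then 1 else (0::real))"
  have "nsq d e0 = 1" unfolding nsq_def e0_def using d
    by (simp add: if_distrib[of "\<lambda>x. x\<^sup>2"] sum.delta' cong: if_cong)
  hence "e0 \<in> T" using d unfolding T_def e0_def by auto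
  hence ne: "T \<noteq> {}" by auto
  have contQ: "continuous_on T (quad_form d A)"
    unfolding quad_form_def
    by (intro continuous_intros continuous_on_subset[OF continuous_on_product_coordinates] subset_UNIV)
  have "compact (quad_form d A ` T)" by (rule compact_continuous_image[OF contQ cT])
  from compact_attains_inf[OF this] ne obtain m where m: "m \<in> quad_form d A ` T"
    and mmin: "\<forall>t\<in>quad_form d A ` T. m \<le> t" by blast
  from m obtain u where uT: "u \<in> T" and mu: "m = quad_form d A u" by auto
  have ray: "quad_form d A w \<ge> m * nsq d w" for w
  proof -
    define wr where "wr = (\<lambda>k. if k < d then w k else 0)"
    have q: "quad_form d A wr = quad_form d A w" and n: "nsq d wr = nsq d w"
      unfolding wr_def by (rule quad_form_restrict, rule nsq_restrict)
    show ?thesis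
    proof (cases "nsq d w = 0")
      case True
      hence "quad_form d A w = 0" by (intro quad_zero) (rule nsq_zero)
      thus ?thesis using True by simp
    next
      case False
      hence pos: "nsq d w > 0" using nsq_nonneg[of d w] by simp
      define c where "c = sqrt (nsq d w)"
      have c: "c > 0" "c\<^sup>2 = nsq d w" unfolding c_def using pos by auto
      have "(\<lambda>k. wr k / c) \<in> T"
      proof -
        have "\<forall>k\<ge>d. wr k / c = 0" by (simp add: wr_def)
        moreover have "nsq d (\<lambda>k. wr k / c) = 1" using c pos by (simp add: nsq_scale n)
        ultimately show ?thesis unfolding T_def by simp
      qed
      hence "m \<le> quad_form d A (\<lambda>k. wr k / c)" using mmin by auto
      also have "\<dots> = quad_form d A w / nsq d w" by (simp add: quad_scale q c)
      finally show ?thesis using pos by (simp add: field_simps)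
    qed
  qed
  have uz: "\<exists>j<d. u j \<noteq> 0"
  proof (rule ccontr)
    assume "\<not> ?thesis"
    hence "nsq d u = 0" unfolding nsq_def by auto
    with uT show False unfolding T_def by auto
  qed
  have eig: "(\<Sum>l<d. A k l * u l) = m * u k" if k: "k < d" for k
  proof -
    define v where "v = (\<lambda>l::nat. if l = k then 1 else (0::real))"
    define \<beta> where "\<beta> = (\<Sum>i<d. \<Sum>l<d. u i * A i l * v l) - m * (\<Sum>i<d. u i * v i)"
    define \<gamma> where "\<gamma> = quad_form d A v - m * nsq d v"
    have "2 * t * \<beta> + t\<^sup>2 * \<gamma> \<ge> 0" for t
    proof -
      have "quad_form d A (\<lambda>i. u i + t * v i) - m * nsq d (\<lambda>i. u i + t * v i) \<ge> 0"
        using ray[of "\<lambda>i. u i + t * v i"] by simp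
      moreover have "quad_form d A u = m" "nsq d u = 1" using mu uT unfolding T_def by auto
      ultimately show ?thesis unfolding \<beta>_def \<gamma>_def
        by (simp add: quad_expand[OF sym] nsq_expand algebra_simps)
    qed
    hence b0: "\<beta> = 0" by (rule quadratic_nonneg_lin0)
    have s1: "(\<Sum>i<d. \<Sum>l<d. u i * A i l * v l) = (\<Sum>i<d. u i * A i k)"
      unfolding v_def using k by (simp add: if_distrib[of "\<lambda>x. _ * x"] sum.delta' cong: if_cong)
    have s2: "(\<Sum>i<d. u i * v i) = u k"
      unfolding v_def using k by (simp add: if_distrib[of "\<lambda>x. _ * x"] sum.delta' cong: if_cong)
    have "(\<Sum>i<d. u i * A i k) = m * u k" using b0 s1 s2 unfolding \<beta>_def by simp
    thus ?thesis by (simp add: sym[of k] mult.commute)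
  qed
  show ?thesis using uz eig ray by blast
qed

definition to_mat :: "nat \<Rightarrow> (nat \<Rightarrow> nat \<Rightarrow> real) \<Rightarrow> real mat" where
  "to_mat d A = mat d d (\<lambda>(i,j). A i j)"

lemma to_mat_carrier: "to_mat d A \<in> carrier_mat d d" unfolding to_mat_def by simp

lemma to_mat_mult_vec: assumes "i < d" "dim_vec v = d"
  shows "(to_mat d A *\<^sub>v v) $ i = (\<Sum>l<d. A i l * v $ l)"
proof -
  have "(to_mat d A *\<^sub>v v) $ i = row (to_mat d A) i \<bullet> v"
    using assms to_mat_carrier[of d A] by simp
  also have "\<dots> = (\<Sum>l = 0..<d. row (to_mat d A) i $ l * v $ l)"
    unfolding scalar_prod_def using assms by simp
  also have "\<dots> = (\<Sum>l<d. A i l * v $ l)"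
    unfolding lessThan_atLeast0 using assms by (intro sum.cong refl) (simp add: to_mat_def)
  finally show ?thesis .
qed

lemma to_mat_mult_left: assumes "i < d" "j < d" "B \<in> carrier_mat d d"
  shows "(to_mat d A * B) $$ (i,j) = (\<Sum>k<d. A i k * B $$ (k,j))"
proof -
  have "(to_mat d A * B) $$ (i,j) = row (to_mat d A) i \<bullet> col B j"
    using assms to_mat_carrier[of d A] by simp
  also have "\<dots> = (\<Sum>k = 0..<d. row (to_mat d A) i $ k * col B j $ k)"
    unfolding scalar_prod_def using assms by simp
  also have "\<dots> = (\<Sum>k<d. A i k * B $$ (k,j))"
    unfolding lessThan_atLeast0 using assms by (intro sum.cong refl) (simp add: to_mat_def)
  finally show ?thesis .
qed

lemma to_mat_mult_right: assumes "i < d" "j < d" "B \<in> carrier_mat d d"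
  shows "(B * to_mat d A) $$ (i,j) = (\<Sum>k<d. B $$ (i,k) * A k j)"
proof -
  have "(B * to_mat d A) $$ (i,j) = row B i \<bullet> col (to_mat d A) j"
    using assms to_mat_carrier[of d A] by simp
  also have "\<dots> = (\<Sum>k = 0..<d. row B i $ k * col (to_mat d A) j $ k)"
    unfolding scalar_prod_def using assms to_mat_carrier[of d A] by simp
  also have "\<dots> = (\<Sum>k<d. B $$ (i,k) * A k j)"
    unfolding lessThan_atLeast0 using assms by (intro sum.cong refl) (simp add: to_mat_def)
  finally show ?thesis .
qed

lemma finite_eigenvalues: "finite (mat_eigenvalues d A)"
proof -
  have C: "to_mat d A \<in> carrier_mat d d" by (rule to_mat_carrier)
  have "mat_eigenvalues d A \<subseteq> {x. poly (char_poly (to_mat d A)) x = 0}"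
  proof
    fix \<mu> assume "\<mu> \<in> mat_eigenvalues d A"
    then obtain v where v: "\<exists>j<d. v j \<noteq> 0" "\<forall>k<d. (\<Sum>l<d. A k l * v l) = \<mu> * v k"
      unfolding mat_eigenvalues_def by auto
    have "eigenvector (to_mat d A) (vec d v) \<mu>"
      unfolding eigenvector_def
    proof (intro conjI)
      show "vec d v \<in> carrier_vec (dim_row (to_mat d A))" using C by auto
      show "vec d v \<noteq> 0\<^sub>v (dim_row (to_mat d A))"
      proof
        assume "vec d v = 0\<^sub>v (dim_row (to_mat d A))"
        hence "\<And>j. j < d \<Longrightarrow> vec d v $ j = 0\<^sub>v d $ j" using C by auto
        with v(1) show False by auto
      qed
      show "to_mat d A *\<^sub>v vec d v = \<mu> \<cdot>\<^sub>v vec d v"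
      proof (rule eq_vecI)
        fix i assume "i < dim_vec (\<mu> \<cdot>\<^sub>v vec d v)"
        hence i: "i < d" by simp
        have "(to_mat d A *\<^sub>v vec d v) $ i = (\<Sum>l<d. A i l * vec d v $ l)"
          using i by (intro to_mat_mult_vec) auto
        also have "\<dots> = (\<Sum>l<d. A i l * v l)" by (intro sum.cong refl) auto
        also have "\<dots> = \<mu> * v i" using v(2) i by auto
        finally show "(to_mat d A *\<^sub>v vec d v) $ i = (\<mu> \<cdot>\<^sub>v vec d v) $ i" using i by simp
      next
        show "dim_vec (to_mat d A *\<^sub>v vec d v) = dim_vec (\<mu> \<cdot>\<^sub>v vec d v)" using C by simp
      qed
    qed
    hence "eigenvalue (to_mat d A) \<mu>" unfolding eigenvalue_def by auto
    thus "\<mu> \<in> {x. poly (char_poly (to_mat d A)) x = 0}"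
      using eigenvalue_root_char_poly[OF C] by auto
  qed
  moreover have "char_poly (to_mat d A) \<noteq> 0"
    using degree_monic_char_poly[OF C] by auto
  ultimately show ?thesis using poly_roots_finite finite_subset by blast
qed

lemma rayleigh_lambda_min:
  assumes sym: "\<And>k l. A k l = A l k" and d: "d \<ge> 1"
  shows "quad_form d A w \<ge> lambda_min d A * nsq d w"
proof -
  obtain u \<mu> where u: "\<exists>j<d. u j \<noteq> 0" "\<forall>k<d. (\<Sum>l<d. A k l * u l) = \<mu> * u k"
    and r: "\<forall>w. quad_form d A w \<ge> \<mu> * nsq d w"
    using min_eigen[of A d, OF sym d] by blast
  have "\<mu> \<in> mat_eigenvalues d A" unfolding mat_eigenvalues_def using u by blast
  hence "lambda_min d A \<le> \<mu>" unfolding lambda_min_def by (rule Min_le[OF finite_eigenvalues])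
  hence "lambda_min d A * nsq d w \<le> \<mu> * nsq d w" using nsq_nonneg by (rule mult_right_mono)
  thus ?thesis using r by (meson order_trans)
qed

definition inv_prop :: "nat \<Rightarrow> (nat \<Rightarrow> nat \<Rightarrow> real) \<Rightarrow> (nat \<Rightarrow> nat \<Rightarrow> real) \<Rightarrow> bool" where
  "inv_prop d A B \<longleftrightarrow>
      (\<forall>i<d. \<forall>j<d. (\<Sum>k<d. A i k * B k j) = (if i = j then 1 else 0)) \<and>
      (\<forall>i<d. \<forall>j<d. (\<Sum>k<d. B i k * A k j) = (if i = j then 1 else 0)) \<and>
      (\<forall>i j. \<not> (i < d \<and> j < d) \<longrightarrow> B i j = 0)"

lemma inv_unique:
  assumes "inv_prop d A B" "inv_prop d A B2" shows "B2 = B"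
proof (intro ext)
  fix i j
  show "B2 i j = B i j"
  proof (cases "i < d \<and> j < d")
    case False thus ?thesis using assms unfolding inv_prop_def by auto
  next
    case True
    have "B2 i j = (\<Sum>k<d. (if i = k then 1 else 0) * B2 k j)"
      using True by (simp add: if_distrib[of "\<lambda>x. x * _"] sum.delta cong: if_cong)
    also have "\<dots> = (\<Sum>k<d. (\<Sum>m<d. B i m * A m k) * B2 k j)"
      using True assms(1) unfolding inv_prop_def by (intro sum.cong refl) auto
    also have "\<dots> = (\<Sum>m<d. B i m * (\<Sum>k<d. A m k * B2 k j))"
      by (simp add: sum_distrib_left sum_distrib_right mult.assoc) (rule sum.swap)
    also have "\<dots> = (\<Sum>m<d. B i m * (if m = j then 1 else 0))"
      using True assms(2) unfolding inv_prop_def by (intro sum.cong refl) auto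
    also have "\<dots> = B i j" using True
      by (simp add: if_distrib[of "\<lambda>x. _ * x"] sum.delta' cong: if_cong)
    finally show ?thesis .
  qed
qed

lemma quad_form_alt: "quad_form d A w = (\<Sum>k<d. w k * (\<Sum>l<d. A k l * w l))"
  unfolding quad_form_def by (simp add: sum_distrib_left mult.assoc)

lemma mat_inv_prop:
  assumes pd: "\<And>w. quad_form d A w \<ge> c * nsq d w" and c: "c > 0"
  shows "inv_prop d A (mat_inv d A)"
proof -
  let ?A = "to_mat d A"
  have C: "?A \<in> carrier_mat d d" by (rule to_mat_carrier)
  have "det ?A \<noteq> 0"
  proof
    assume "det ?A = 0"
    then obtain v where v: "v \<in> carrier_vec d" "v \<noteq> 0\<^sub>v d" "?A *\<^sub>v v = 0\<^sub>v d"
      using det_0_iff_vec_prod_zero_field[OF C] by auto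
    define w where "w = (\<lambda>k. if k < d then v $ k else 0)"
    have Aw: "(\<Sum>l<d. A k l * w l) = 0" if "k < d" for k
    proof -
      have "(?A *\<^sub>v v) $ k = 0" using v(3) that by simp
      moreover have "(?A *\<^sub>v v) $ k = (\<Sum>l<d. A k l * v $ l)"
        using that v(1) by (intro to_mat_mult_vec) auto
      ultimately show ?thesis using that by (simp add: w_def)
    qed
    have "quad_form d A w = 0" unfolding quad_form_alt using Aw by simp
    moreover have "nsq d w > 0"
    proof -
      obtain j where j: "j < d" "v $ j \<noteq> 0" using v(1,2) by (metis eq_vecI carrier_vecD index_zero_vec)
      have "nsq d w \<noteq> 0" using nsq_zero[of d w j] j by (auto simp: w_def)
      thus ?thesis using nsq_nonneg[of d w] by linarith
    qed
    ultimately show False using pd[of w] mult_pos_pos[OF c] by fastforce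
  qed
  from det_non_zero_imp_unit[OF C this, unfolded Units_def, of "()"]
  obtain B where B: "B \<in> carrier_mat d d" and BA: "B * ?A = 1\<^sub>m d" and AB: "?A * B = 1\<^sub>m d"
    by (auto simp: ring_mat_def)
  define Bf where "Bf = (\<lambda>i j. if i < d \<and> j < d then B $$ (i,j) else 0)"
  have P: "inv_prop d A Bf" unfolding inv_prop_def
  proof (intro conjI allI impI)
    fix i j assume ij: "i < d" "j < d"
    have "(?A * B) $$ (i,j) = (if i = j then 1 else 0)" using AB ij by simp
    moreover have "(?A * B) $$ (i,j) = (\<Sum>k<d. A i k * B $$ (k,j))"
      using ij B by (rule to_mat_mult_left)
    moreover have "(\<Sum>k<d. A i k * Bf k j) = (\<Sum>k<d. A i k * B $$ (k,j))"
      using ij unfolding Bf_def by (intro sum.cong refl) auto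
    ultimately show "(\<Sum>k<d. A i k * Bf k j) = (if i = j then 1 else 0)" by simp
  next
    fix i j assume ij: "i < d" "j < d"
    have "(B * ?A) $$ (i,j) = (if i = j then 1 else 0)" using BA ij B by simp
    moreover have "(B * ?A) $$ (i,j) = (\<Sum>k<d. B $$ (i,k) * A k j)"
      using ij B by (rule to_mat_mult_right)
    moreover have "(\<Sum>k<d. Bf i k * A k j) = (\<Sum>k<d. B $$ (i,k) * A k j)"
      using ij unfolding Bf_def by (intro sum.cong refl) auto
    ultimately show "(\<Sum>k<d. Bf i k * A k j) = (if i = j then 1 else 0)" by simp
  next
    fix i j assume "\<not> (i < d \<and> j < d)" thus "Bf i j = 0" unfolding Bf_def by auto
  qed
  have "mat_inv d A = Bf" unfolding mat_inv_def
    using P inv_unique[OF P] unfolding inv_prop_def[symmetric] by (rule the_equality) 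
  thus ?thesis using P by simp
qed

lemma re_member_ge:
  assumes ray: "\<And>w. quad_form d A w \<ge> lmin * nsq d w" and lmin: "lmin > 0"
    and S': "S' \<subseteq> {..<d}" and nz: "\<exists>k<d. u k \<noteq> 0"
    and cone: "(\<Sum>k\<in>{..<d} - S'. \<bar>u k\<bar>) \<le> 1 * (\<Sum>k\<in>S'. \<bar>u k\<bar>)"
  shows "(\<Sum>k\<in>S'. (u k)\<^sup>2) > 0" "quad_form d A u / (\<Sum>k\<in>S'. (u k)\<^sup>2) \<ge> lmin"
proof -
  have fin: "finite S'" using S' finite_subset by blast
  show pos: "(\<Sum>k\<in>S'. (u k)\<^sup>2) > 0"
  proof (rule ccontr)
    assume "\<not> ?thesis"
    hence "(\<Sum>k\<in>S'. (u k)\<^sup>2) = 0" using sum_nonneg[of S' "\<lambda>k. (u k)\<^sup>2"] by simp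
    hence z: "\<forall>k\<in>S'. u k = 0" using fin by (subst (asm) sum_nonneg_eq_0_iff) auto
    hence "(\<Sum>k\<in>S'. \<bar>u k\<bar>) = 0" by simp
    with cone have "(\<Sum>k\<in>{..<d} - S'. \<bar>u k\<bar>) \<le> 0" by simp
    hence "(\<Sum>k\<in>{..<d} - S'. \<bar>u k\<bar>) = 0"
      using sum_nonneg[of "{..<d} - S'" "\<lambda>k. \<bar>u k\<bar>"] by linarith
    hence "\<forall>k\<in>{..<d} - S'. \<bar>u k\<bar> = 0" by (subst (asm) sum_nonneg_eq_0_iff) auto
    with z nz show False by auto
  qed
  have "(\<Sum>k\<in>S'. (u k)\<^sup>2) \<le> nsq d u" unfolding nsq_def
    by (rule sum_mono2) (use S' in auto)
  hence "lmin * (\<Sum>k\<in>S'. (u k)\<^sup>2) \<le> quad_form d A u"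
    using ray[of u] lmin by (meson mult_left_mono less_imp_le order_trans)
  thus "quad_form d A u / (\<Sum>k\<in>S'. (u k)\<^sup>2) \<ge> lmin" using pos by (simp add: pos_le_divide_eq)
qed

lemma RE_props:
  assumes ray: "\<And>w. quad_form d A w \<ge> lmin * nsq d w" and lmin: "lmin > 0"
    and S': "S' \<subseteq> {..<d}" "card S' \<le> s" and sv: "supvec d u" and nz: "\<exists>k<d. u k \<noteq> 0"
    and cone: "(\<Sum>k\<in>{..<d} - S'. \<bar>u k\<bar>) \<le> 1 * (\<Sum>k\<in>S'. \<bar>u k\<bar>)"
  shows "lmin \<le> RE d A s 1" "RE d A s 1 * (\<Sum>k\<in>S'. (u k)\<^sup>2) \<le> quad_form d A u"
proof -
  define R where "R = {quad_form d A u / (\<Sum>k\<in>S. (u k)\<^sup>2) | S u.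
      S \<subseteq> {..<d} \<and> card S \<le> s \<and> supvec d u \<and> (\<exists>k<d. u k \<noteq> 0) \<and>
      (\<Sum>k\<in>{..<d} - S. \<bar>u k\<bar>) \<le> 1 * (\<Sum>k\<in>S. \<bar>u k\<bar>)}"
  have RE: "RE d A s 1 = Inf R" unfolding RE_def R_def by simp
  have mem: "quad_form d A u / (\<Sum>k\<in>S'. (u k)\<^sup>2) \<in> R"
    unfolding R_def using S' sv nz cone by blast
  have lb: "\<forall>x\<in>R. lmin \<le> x"
    unfolding R_def using re_member_ge(2)[OF ray lmin] by blast
  show "lmin \<le> RE d A s 1" unfolding RE
    by (rule cInf_greatest) (use mem lb in auto)
  have "Inf R \<le> quad_form d A u / (\<Sum>k\<in>S'. (u k)\<^sup>2)"
    by (rule cInf_lower[OF mem]) (use lb in \<open>auto simp: bdd_below_def\<close>)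
  moreover have "(\<Sum>k\<in>S'. (u k)\<^sup>2) > 0" using re_member_ge(1)[OF ray lmin S'(1) nz cone] .
  ultimately show "RE d A s 1 * (\<Sum>k\<in>S'. (u k)\<^sup>2) \<le> quad_form d A u"
    unfolding RE by (simp add: le_divide_eq)
qed

lemma core:
  fixes d s :: nat and A Sn :: "nat \<Rightarrow> nat \<Rightarrow> real" and vstar vhat :: "nat \<Rightarrow> real"
    and t lam' \<kappa> lmin :: real and S :: "nat set"
  assumes inv: "\<And>j. j < d \<Longrightarrow> (\<Sum>k<d. vstar k * A k j) = e1 j"
    and supp: "\<And>k. k \<ge> d \<Longrightarrow> vstar k = 0"
    and S_def: "S = {k. k < d \<and> vstar k \<noteq> 0}" and s_def: "s = card S"
    and close: "\<And>k l. k < d \<Longrightarrow> l < d \<Longrightarrow> \<bar>Sn k l - A k l\<bar> \<le> t" and t: "t \<ge> 0"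
    and ray: "\<And>w. quad_form d A w \<ge> lmin * nsq d w" and lmin: "lmin > 0"
    and spars: "4 * t * real s \<le> (1 - \<kappa>) * lmin" and \<kappa>: "0 < \<kappa>" "\<kappa> < 1"
    and lam: "lam' \<ge> l1norm d vstar * t"
    and vh: "clime_minimizer d Sn lam' vhat"
  shows "l1norm d (\<lambda>k. vhat k - vstar k) \<le> 8 * lam' * real s / (\<kappa> * RE d A s 1) \<and>
        (\<Sum>k\<in>{..<d} - S. \<bar>vhat k - vstar k\<bar>) \<le> (\<Sum>k\<in>S. \<bar>vhat k - vstar k\<bar>)"
proof -
  have Ssub: "S \<subseteq> {..<d}" unfolding S_def by auto
  have finS: "finite S" using Ssub finite_subset by blast
  have l1nn: "\<And>f. l1norm d f \<ge> 0" unfolding l1norm_def by (intro sum_nonneg) auto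
  have lam0: "lam' \<ge> 0" using lam l1nn[of vstar] t by (meson mult_nonneg_nonneg order_trans)
  have feas_vs: "clime_feasible d Sn lam' vstar"
    unfolding clime_feasible_def supvec_def
  proof (intro conjI allI impI)
    fix k :: nat assume "d \<le> k" thus "vstar k = 0" by (rule supp)
  next
    fix j assume j: "j < d"
    have eq: "(\<Sum>k<d. vstar k * Sn k j) - e1 j = (\<Sum>k<d. vstar k * (Sn k j - A k j))"
      using inv[OF j] by (simp add: right_diff_distrib sum_subtractf)
    have "\<bar>\<Sum>k<d. vstar k * (Sn k j - A k j)\<bar> \<le> (\<Sum>k<d. \<bar>vstar k\<bar> * t)"
    proof (rule order_trans[OF sum_abs], rule sum_mono)
      fix k assume "k \<in> {..<d}"
      hence "\<bar>Sn k j - A k j\<bar> \<le> t" using close j by auto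
      thus "\<bar>vstar k * (Sn k j - A k j)\<bar> \<le> \<bar>vstar k\<bar> * t"
        by (simp add: abs_mult mult_left_mono)
    qed
    also have "\<dots> = l1norm d vstar * t" unfolding l1norm_def by (simp add: sum_distrib_right)
    finally show "\<bar>(\<Sum>k<d. vstar k * Sn k j) - e1 j\<bar> \<le> lam'" using eq lam by simp
  qed
  have feas_vh: "clime_feasible d Sn lam' vhat" and l1le: "l1norm d vhat \<le> l1norm d vstar"
    using vh feas_vs unfolding clime_minimizer_def by auto
  define h where "h = (\<lambda>k. vhat k - vstar k)"
  have split: "\<And>f. l1norm d f = (\<Sum>k\<in>S. \<bar>f k\<bar>) + (\<Sum>k\<in>{..<d} - S. \<bar>f k\<bar>)"
    unfolding l1norm_def by (subst sum.subset_diff[OF Ssub]) (auto simp: add.commute)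
  have out: "\<And>k. k \<in> {..<d} - S \<Longrightarrow> vstar k = 0" by (auto simp: S_def)
  have e1': "(\<Sum>k\<in>{..<d} - S. \<bar>vhat k\<bar>) = (\<Sum>k\<in>{..<d} - S. \<bar>h k\<bar>)"
    by (intro sum.cong refl) (simp add: h_def out)
  have e2: "(\<Sum>k\<in>{..<d} - S. \<bar>vstar k\<bar>) = 0" by (simp add: out)
  have e3: "(\<Sum>k\<in>S. \<bar>vstar k\<bar> - \<bar>h k\<bar>) \<le> (\<Sum>k\<in>S. \<bar>vhat k\<bar>)"
    by (rule sum_mono) (unfold h_def; arith)
  have cone: "(\<Sum>k\<in>{..<d} - S. \<bar>h k\<bar>) \<le> (\<Sum>k\<in>S. \<bar>h k\<bar>)"
    using l1le split[of vhat] split[of vstar] e1' e2 e3 by (simp add: sum_subtractf)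
  define a where "a = (\<Sum>k\<in>S. \<bar>h k\<bar>)"
  have a0: "a \<ge> 0" unfolding a_def by (intro sum_nonneg) auto
  have l1h: "l1norm d h \<le> 2 * a" using split[of h] cone unfolding a_def by simp
  have hsupp: "\<And>k. k \<ge> d \<Longrightarrow> h k = 0"
    using feas_vh supp unfolding h_def clime_feasible_def supvec_def by auto
  have grad: "\<bar>\<Sum>k<d. h k * Sn k j\<bar> \<le> 2 * lam'" if j: "j < d" for j
  proof -
    have "(\<Sum>k<d. h k * Sn k j) = ((\<Sum>k<d. vhat k * Sn k j) - e1 j) - ((\<Sum>k<d. vstar k * Sn k j) - e1 j)"
      unfolding h_def by (simp add: left_diff_distrib sum_subtractf)
    moreover have "\<bar>(\<Sum>k<d. vhat k * Sn k j) - e1 j\<bar> \<le> lam'"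
      using feas_vh j unfolding clime_feasible_def by auto
    moreover have "\<bar>(\<Sum>k<d. vstar k * Sn k j) - e1 j\<bar> \<le> lam'"
      using feas_vs j unfolding clime_feasible_def by auto
    ultimately show ?thesis by linarith
  qed
  define L where "L = l1norm d h"
  have L0: "L \<ge> 0" unfolding L_def by (rule l1nn)
  have T1: "(\<Sum>k<d. \<Sum>l<d. h k * Sn k l * h l) \<le> 2 * lam' * L"
  proof -
    have "(\<Sum>k<d. \<Sum>l<d. h k * Sn k l * h l) = (\<Sum>l<d. h l * (\<Sum>k<d. h k * Sn k l))"
      by (subst sum.swap) (simp add: sum_distrib_left mult.commute mult.left_commute)
    also have "\<dots> \<le> (\<Sum>l<d. \<bar>h l\<bar> * (2 * lam'))"
    proof (rule sum_mono)
      fix l assume l: "l \<in> {..<d}"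
      have "h l * (\<Sum>k<d. h k * Sn k l) \<le> \<bar>h l\<bar> * \<bar>\<Sum>k<d. h k * Sn k l\<bar>"
        by (metis abs_ge_self abs_mult)
      also have "\<dots> \<le> \<bar>h l\<bar> * (2 * lam')" using grad l by (intro mult_left_mono) auto
      finally show "h l * (\<Sum>k<d. h k * Sn k l) \<le> \<bar>h l\<bar> * (2 * lam')" .
    qed
    also have "\<dots> = (\<Sum>l<d. \<bar>h l\<bar>) * (2 * lam')" by (rule sum_distrib_right[symmetric])
    also have "\<dots> = 2 * lam' * L" unfolding L_def l1norm_def by (rule mult.commute)
    finally show ?thesis .
  qed
  have T2: "\<bar>\<Sum>k<d. \<Sum>l<d. h k * (Sn k l - A k l) * h l\<bar> \<le> t * L\<^sup>2"
  proof -
    have "\<bar>\<Sum>k<d. \<Sum>l<d. h k * (Sn k l - A k l) * h l\<bar> \<le> (\<Sum>k<d. \<Sum>l<d. \<bar>h k\<bar> * t * \<bar>h l\<bar>)"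
    proof (rule order_trans[OF sum_abs], rule sum_mono)
      fix k assume k: "k \<in> {..<d}"
      show "\<bar>\<Sum>l<d. h k * (Sn k l - A k l) * h l\<bar> \<le> (\<Sum>l<d. \<bar>h k\<bar> * t * \<bar>h l\<bar>)"
      proof (rule order_trans[OF sum_abs], rule sum_mono)
        fix l assume l: "l \<in> {..<d}"
        have "\<bar>Sn k l - A k l\<bar> \<le> t" using close k l by auto
        thus "\<bar>h k * (Sn k l - A k l) * h l\<bar> \<le> \<bar>h k\<bar> * t * \<bar>h l\<bar>"
          by (simp add: abs_mult mult_right_mono mult_left_mono)
      qed
    qed
    also have "\<dots> = t * L\<^sup>2" unfolding L_def l1norm_def power2_eq_square
      by (simp add: sum_product sum_distrib_left mult.commute mult.left_commute)
    finally show ?thesis .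
  qed
  have Qeq: "quad_form d A h = (\<Sum>k<d. \<Sum>l<d. h k * Sn k l * h l)
      - (\<Sum>k<d. \<Sum>l<d. h k * (Sn k l - A k l) * h l)"
    unfolding quad_form_def by (simp add: sum_subtractf[symmetric] algebra_simps)
  have Qb: "quad_form d A h \<le> 2 * lam' * L + t * L\<^sup>2" using Qeq T1 T2 by linarith
  have L2a: "L \<le> 2 * a" using l1h unfolding L_def .
  have Qb2: "quad_form d A h \<le> 4 * lam' * a + 4 * t * a\<^sup>2"
  proof -
    have "2 * lam' * L \<le> 2 * lam' * (2 * a)" using L2a lam0 by (intro mult_left_mono) auto
    moreover have "L\<^sup>2 \<le> (2 * a)\<^sup>2" using L2a L0 by (intro power_mono) auto
    hence "t * L\<^sup>2 \<le> t * (2 * a)\<^sup>2" using t by (intro mult_left_mono) auto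
    ultimately show ?thesis using Qb by (simp add: power2_eq_square algebra_simps)
  qed
  have goal1: "L \<le> 8 * lam' * real s / (\<kappa> * RE d A s 1)"
  proof (cases "a = 0")
    case True
    hence L00: "L = 0" using L2a L0 by simp
    show ?thesis
    proof (cases "s = 0")
      case True thus ?thesis using L00 by simp
    next
      case False
      hence "S \<noteq> {}" using s_def by auto
      then obtain k where kS: "k \<in> S" by auto
      hence kd: "k < d" using Ssub by auto
      define u where "u = (\<lambda>i::nat. if i = k then 1 else (0::real))"
      have "(\<Sum>i\<in>{..<d} - S. \<bar>u i\<bar>) = 0" unfolding u_def using kS by (intro sum.neutral) auto
      moreover have "(\<Sum>i\<in>S. \<bar>u i\<bar>) = 1" unfolding u_def using kS finS
        by (simp add: if_distrib[of abs] sum.delta cong: if_cong)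
      ultimately have cu: "(\<Sum>i\<in>{..<d} - S. \<bar>u i\<bar>) \<le> 1 * (\<Sum>i\<in>S. \<bar>u i\<bar>)" by simp
      have "lmin \<le> RE d A s 1"
        by (rule RE_props(1)[OF ray lmin Ssub _ _ _ cu]) (use s_def kd in \<open>auto simp: u_def supvec_def\<close>)
      hence "RE d A s 1 > 0" using lmin by linarith
      thus ?thesis using L00 lam0 \<kappa> by (simp add: divide_nonneg_pos)
    qed
  next
    case False
    hence apos: "a > 0" using a0 by simp
    have "S \<noteq> {}" using apos unfolding a_def by auto
    hence spos: "s > 0" using s_def finS by (simp add: card_gt_0_iff)
    have nz: "\<exists>k<d. h k \<noteq> 0"
    proof (rule ccontr)
      assume "\<not> ?thesis"
      hence "a = 0" unfolding a_def using Ssub by (intro sum.neutral) auto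
      thus False using apos by simp
    qed
    have cone1: "(\<Sum>k\<in>{..<d} - S. \<bar>h k\<bar>) \<le> 1 * (\<Sum>k\<in>S. \<bar>h k\<bar>)" using cone by simp
    have sv: "supvec d h" unfolding supvec_def using hsupp by auto
    have REl: "lmin \<le> RE d A s 1" and REq: "RE d A s 1 * (\<Sum>k\<in>S. (h k)\<^sup>2) \<le> quad_form d A h"
      using RE_props[OF ray lmin Ssub _ sv nz cone1] s_def by auto
    define R where "R = RE d A s 1"
    have Rpos: "R > 0" using REl lmin unfolding R_def by linarith
    have cs: "a\<^sup>2 \<le> (\<Sum>k\<in>S. (h k)\<^sup>2) * real s"
      using sum_squared_le_sum_of_squares[of "\<lambda>k. \<bar>h k\<bar>" S] unfolding a_def s_def by simp
    have "R * a\<^sup>2 \<le> R * ((\<Sum>k\<in>S. (h k)\<^sup>2) * real s)" using cs Rpos by (intro mult_left_mono) auto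
    also have "\<dots> \<le> quad_form d A h * real s" using REq unfolding R_def
      by (simp add: mult.assoc[symmetric] mult_right_mono)
    also have "\<dots> \<le> (4 * lam' * a + 4 * t * a\<^sup>2) * real s" using Qb2 by (intro mult_right_mono) auto
    finally have ineq: "R * a\<^sup>2 \<le> 4 * lam' * a * real s + (4 * t * real s) * a\<^sup>2"
      by (simp add: algebra_simps)
    have "(4 * t * real s) * a\<^sup>2 \<le> ((1 - \<kappa>) * R) * a\<^sup>2"
    proof (rule mult_right_mono)
      have "(1 - \<kappa>) * lmin \<le> (1 - \<kappa>) * R" using REl \<kappa> unfolding R_def by (intro mult_left_mono) auto
      thus "4 * t * real s \<le> (1 - \<kappa>) * R" using spars by linarith
    qed auto
    with ineq have "\<kappa> * R * a\<^sup>2 \<le> 4 * lam' * real s * a" by (simp add: algebra_simps)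
    hence "\<kappa> * R * a \<le> 4 * lam' * real s" using apos by (simp add: power2_eq_square mult.assoc[symmetric])
    hence "a \<le> 4 * lam' * real s / (\<kappa> * R)" using Rpos \<kappa> by (simp add: pos_le_divide_eq mult.commute mult.left_commute)
    hence "2 * a \<le> 8 * lam' * real s / (\<kappa> * R)" by simp
    thus ?thesis using L2a unfolding R_def by linarith
  qed
  show ?thesis using goal1 cone unfolding L_def h_def by simp
qed


lemma max_norm_le_iff:
  "max_norm d D \<le> t \<longleftrightarrow> 0 \<le> t \<and> (\<forall>k<d. \<forall>l<d. \<bar>D k l\<bar> \<le> t)"
proof -
  have fin: "finite {\<bar>D k l\<bar> | k l. k < d \<and> l < d}"
    by (rule finite_image_set2) auto
  have "max_norm d D \<le> t \<longleftrightarrow> (\<forall>x\<in>{\<bar>D k l\<bar> | k l. k < d \<and> l < d} \<union> {0}. x \<le> t)"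
    unfolding max_norm_def using fin by (intro Max_le_iff) auto
  thus ?thesis by blast
qed

theorem lemma7:
  fixes M :: "'a measure" and n d :: nat
    and X :: "nat \<Rightarrow> nat \<Rightarrow> 'a \<Rightarrow> real"   \<comment> \<open>X i j: coordinate j of X_i, i < n\<close>
    and Xg :: "nat \<Rightarrow> 'a \<Rightarrow> real"           \<comment> \<open>Xg j: coordinate j of X\<close>
    and K cbar A \<kappa> \<delta> lam' :: real
    and \<Sigma>X :: "nat \<Rightarrow> nat \<Rightarrow> real" and vstar :: "nat \<Rightarrow> real"
    and S :: "nat set" and s :: nat
  assumes "prob_space M"
    and "n \<ge> 1" and "d \<ge> 1"
    and meas_X: "\<And>i j. i < n \<Longrightarrow> j < d \<Longrightarrow> X i j \<in> borel_measurable M"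
    and meas_Xg: "\<And>j. j < d \<Longrightarrow> Xg j \<in> borel_measurable M"
    and indep: "prob_space.indep_vars M (\<lambda>i. PiM {..<d} (\<lambda>_. borel))
                  (\<lambda>i \<omega>. restrict (\<lambda>j. X i j \<omega>) {..<d}) {..<n}"
    and ident: "\<And>i. i < n \<Longrightarrow>
        distr M (PiM {..<d} (\<lambda>_. borel)) (\<lambda>\<omega>. restrict (\<lambda>j. X i j \<omega>) {..<d}) =
        distr M (PiM {..<d} (\<lambda>_. borel)) (\<lambda>\<omega>. restrict (\<lambda>j. Xg j \<omega>) {..<d})"
    and K_def: "ereal K = (SUP j\<in>{..<d}. psi2_norm M (Xg j))"
    and \<Sigma>X_def: "\<Sigma>X = (\<lambda>k l. if k < d \<and> l < d
                        then prob_space.expectation M (\<lambda>\<omega>. Xg k \<omega> * Xg l \<omega>) else 0)"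
    and cbar: "\<And>A'. A' > 0 \<Longrightarrow> A' * sqrt (ln (real d) / real n) \<le> 1 \<Longrightarrow>
        measure M {\<omega> \<in> space M. max_norm d (\<lambda>k l. sample_cov n X \<omega> k l - \<Sigma>X k l)
                        > 4 * A' * K\<^sup>2 * sqrt (ln (real d) / real n)}
          \<le> 2 * real d powr (2 - cbar * A'\<^sup>2)"
    and A_pos: "A > 0" and A_le: "A * sqrt (ln (real d) / real n) \<le> 1"
    and \<kappa>: "0 < \<kappa>" "\<kappa> < 1"
    and \<delta>: "lambda_min d \<Sigma>X > \<delta>" "\<delta> > 0"
    and vstar_def: "vstar = (\<lambda>k. mat_inv d \<Sigma>X k 0)"
    and S_def: "S = {k. k < d \<and> vstar k \<noteq> 0}"
    and s_def: "s = card S"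
    and sparsity: "real s * sqrt (ln (real d) / real n)
        \<le> (1 - \<kappa>) * lambda_min d \<Sigma>X / ((1 + 1)\<^sup>2 * (4 * A * K\<^sup>2))"
    and lam: "lam' \<ge> l1norm d vstar * 4 * A * K\<^sup>2 * sqrt (ln (real d) / real n)"
  shows "\<exists>E \<in> sets M. measure M E \<ge> 1 - 2 * real d powr (2 - cbar * A\<^sup>2) \<and>
     (\<forall>\<omega>\<in>E. \<forall>vhat. clime_minimizer d (sample_cov n X \<omega>) lam' vhat \<longrightarrow>
        l1norm d (\<lambda>k. vhat k - vstar k) \<le> 8 * lam' * real s / (\<kappa> * RE d \<Sigma>X s 1) \<and>
        (\<Sum>k\<in>{..<d} - S. \<bar>vhat k - vstar k\<bar>) \<le> (\<Sum>k\<in>S. \<bar>vhat k - vstar k\<bar>))"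
proof -
  interpret prob_space M by (rule assms(1))
  have sym: "\<And>k l. \<Sigma>X k l = \<Sigma>X l k" unfolding \<Sigma>X_def by (auto simp: mult.commute)
  have d1: "d \<ge> 1" by fact
  have ray: "\<And>w. quad_form d \<Sigma>X w \<ge> lambda_min d \<Sigma>X * nsq d w"
    using rayleigh_lambda_min[of \<Sigma>X d, OF sym d1] .
  have lmin: "lambda_min d \<Sigma>X > 0" using \<delta> by linarith
  have IP: "inv_prop d \<Sigma>X (mat_inv d \<Sigma>X)" by (rule mat_inv_prop[OF ray lmin])
  have d0: "0 < d" using d1 by simp
  have inv: "(\<Sum>k<d. vstar k * \<Sigma>X k j) = e1 j" if j: "j < d" for j
  proof -
    have "(\<Sum>k<d. vstar k * \<Sigma>X k j) = (\<Sum>k<d. \<Sigma>X j k * mat_inv d \<Sigma>X k 0)"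
      unfolding vstar_def by (intro sum.cong refl) (simp add: sym[of _ j] mult.commute)
    also have "\<dots> = (if j = 0 then 1 else 0)" using IP j d0 unfolding inv_prop_def by auto
    finally show ?thesis by (simp add: e1_def)
  qed
  have supp: "\<And>k. k \<ge> d \<Longrightarrow> vstar k = 0" using IP unfolding inv_prop_def vstar_def by auto
  define r where "r = sqrt (ln (real d) / real n)"
  define t where "t = 4 * A * K\<^sup>2 * r"
  have r0: "r \<ge> 0" unfolding r_def using d1 by simp
  have t0: "t \<ge> 0" unfolding t_def using A_pos r0 by simp
  have spars: "4 * t * real s \<le> (1 - \<kappa>) * lambda_min d \<Sigma>X"
  proof (cases "K = 0")
    case True thus ?thesis unfolding t_def using \<kappa> lmin by simp
  next
    case False
    hence p: "(1 + 1)\<^sup>2 * (4 * A * K\<^sup>2) > 0" using A_pos by simp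
    have "real s * r * ((1 + 1)\<^sup>2 * (4 * A * K\<^sup>2)) \<le> (1 - \<kappa>) * lambda_min d \<Sigma>X"
      using sparsity p unfolding r_def by (simp add: pos_le_divide_eq)
    thus ?thesis unfolding t_def by (simp add: algebra_simps)
  qed
  have lam2: "lam' \<ge> l1norm d vstar * t" using lam unfolding t_def r_def by (simp add: algebra_simps)
  define D where "D = (\<lambda>\<omega> k l. sample_cov n X \<omega> k l - \<Sigma>X k l)"
  define E where "E = {\<omega> \<in> space M. \<not> (max_norm d (D \<omega>) > t)}"
  have Eeq: "E = {\<omega> \<in> space M. \<forall>k\<in>{..<d}. \<forall>l\<in>{..<d}. \<bar>D \<omega> k l\<bar> \<le> t}"
    unfolding E_def using t0 by (auto simp: not_less max_norm_le_iff)
  have Emeas: "E \<in> sets M" unfolding Eeq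
  proof (intro sets.sets_Collect_finite_All finite_lessThan)
    fix k l assume k: "k \<in> {..<d}" and l: "l \<in> {..<d}"
    have g: "(\<lambda>\<omega>. sample_cov n X \<omega> k l) \<in> borel_measurable M"
      unfolding sample_cov_def
      by (intro borel_measurable_times borel_measurable_const borel_measurable_sum)
         (use k l in \<open>auto intro: meas_X\<close>)
    have "(\<lambda>\<omega>. \<bar>D \<omega> k l\<bar>) \<in> borel_measurable M"
      unfolding D_def using g by measurable
    thus "{\<omega> \<in> space M. \<bar>D \<omega> k l\<bar> \<le> t} \<in> sets M" by measurable
  qed
  have compl: "space M - E = {\<omega> \<in> space M. max_norm d (\<lambda>k l. sample_cov n X \<omega> k l - \<Sigma>X k l)
                        > 4 * A * K\<^sup>2 * sqrt (ln (real d) / real n)}"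
    unfolding E_def D_def t_def r_def by auto
  have "measure M (space M - E) = 1 - measure M E" by (rule prob_compl[OF Emeas])
  moreover have "measure M (space M - E) \<le> 2 * real d powr (2 - cbar * A\<^sup>2)"
    unfolding compl by (rule cbar[OF A_pos A_le])
  ultimately have PE: "measure M E \<ge> 1 - 2 * real d powr (2 - cbar * A\<^sup>2)" by linarith
  show ?thesis
  proof (intro bexI[OF _ Emeas] conjI PE ballI allI impI)
    fix \<omega> vhat assume \<omega>: "\<omega> \<in> E" and vh: "clime_minimizer d (sample_cov n X \<omega>) lam' vhat"
    have close: "\<And>k l. k < d \<Longrightarrow> l < d \<Longrightarrow> \<bar>sample_cov n X \<omega> k l - \<Sigma>X k l\<bar> \<le> t"
      using \<omega> unfolding Eeq D_def by auto
    note C = core[OF inv supp S_def s_def close t0 ray lmin spars \<kappa> lam2 vh]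
    show "l1norm d (\<lambda>k. vhat k - vstar k) \<le> 8 * lam' * real s / (\<kappa> * RE d \<Sigma>X s 1)"
      using C by blast
    show "(\<Sum>k\<in>{..<d} - S. \<bar>vhat k - vstar k\<bar>) \<le> (\<Sum>k\<in>S. \<bar>vhat k - vstar k\<bar>)"
      using C by blast
  qed
qed

end
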